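(* Let $N=1$ and assume (H-EL) and (H-R). For $M>0$ let $u_M$ be a minimizer of $E$ in $\mathcal D_M$, even about $0$. Then $u_M(0)\to0$ as $M\to0^+$.
   Context: Hypothesis (H-EL): $Q\in C^1((0,+\infty))$, $Q\equiv0$ on $(-\infty,0]$, $\inf Q>-\infty$, $Q(u)\sim Au^{1-m}$ as $u\to0^+$ with $A>0$, $1<m<3$, and $|sQ'(s)|\le CQ(s)$ for small $s>0$. $R(s)=Q(s)/s$. (H-R): $R'\ne0$ on $(0,\delta)\cup(\delta^{-1},\infty)$ for some $\delta\in(0,1)$. $E[u]=\int_{\mathbb{R}}(\tfrac12(u')^2+Q(u))$, $\mathcal D_M=\{u\in H^1(\mathbb{R}):u\ge0,\int u=M\}$. *)

theory Defs
  imports "HOL-Analysis.Analysis" "HOL-Library.Landau_Symbols"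
begin

text \<open>H^1(R) functions on the line, represented by their continuous representative:
  u is square integrable and u(b) - u(a) is the integral over [a,b] of a square-integrable
  weak derivative g.\<close>

definition is_weak_deriv :: "(real \<Rightarrow> real) \<Rightarrow> (real \<Rightarrow> real) \<Rightarrow> bool" where
  "is_weak_deriv u g \<longleftrightarrow> g \<in> borel_measurable lborel \<and> integrable lborel (\<lambda>x. (g x)\<^sup>2) \<and>
     (\<forall>a b. a \<le> b \<longrightarrow> u b - u a = (LBINT t=a..b. g t))"

definition H1 :: "(real \<Rightarrow> real) set" where
  "H1 = {u. u \<in> borel_measurable lborel \<and> integrable lborel (\<lambda>x. (u x)\<^sup>2) \<and> (\<exists>g. is_weak_deriv u g)}"

definition wderiv :: "(real \<Rightarrow> real) \<Rightarrow> real \<Rightarrow> real" where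
  "wderiv u = (SOME g. is_weak_deriv u g)"

definition ext_integral :: "(real \<Rightarrow> real) \<Rightarrow> ereal" where
  "ext_integral f = enn2ereal (\<integral>\<^sup>+ x. ennreal (max 0 (f x)) \<partial>lborel)
                  - enn2ereal (\<integral>\<^sup>+ x. ennreal (max 0 (- f x)) \<partial>lborel)"

definition energy :: "(real \<Rightarrow> real) \<Rightarrow> (real \<Rightarrow> real) \<Rightarrow> ereal" where
  "energy Q u = ext_integral (\<lambda>x. (1/2) * (wderiv u x)\<^sup>2 + Q (u x))"

definition DM :: "real \<Rightarrow> (real \<Rightarrow> real) set" where
  "DM M = {u \<in> H1. (\<forall>x. u x \<ge> 0) \<and> integrable lborel u \<and> (\<integral>x. u x \<partial>lborel) = M}"

definition is_minimizer :: "(real \<Rightarrow> real) \<Rightarrow> real \<Rightarrow> (real \<Rightarrow> real) \<Rightarrow> bool" where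
  "is_minimizer Q M u \<longleftrightarrow> u \<in> DM M \<and> (\<forall>v\<in>DM M. energy Q u \<le> energy Q v)"

end

theory Submission
  imports Defs
begin


lemma Q_small:
  fixes Q :: "real \<Rightarrow> real" and A m :: real
  assumes "Q \<sim>[at_right 0] (\<lambda>s. A * s powr (1 - m))" "A > 0"
  shows "\<exists>s1>0. \<forall>s. 0 < s \<and> s < s1 \<longrightarrow> 0 \<le> Q s \<and> Q s \<le> 2 * A * s powr (1 - m)"
proof -
  have ev: "eventually (\<lambda>s. Q s \<noteq> 0 \<or> A * s powr (1 - m) \<noteq> 0) (at_right 0)"
    using assms(2) by (auto simp: eventually_at_right_less intro!: eventually_mono[OF eventually_at_right_less[of 0]])
  have "((\<lambda>s. Q s / (A * s powr (1 - m))) \<longlongrightarrow> 1) (at_right 0)"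
    by (rule asymp_equivD_strong[OF assms(1) ev])
  hence "eventually (\<lambda>s. Q s / (A * s powr (1 - m)) \<in> {0<..<2}) (at_right 0)"
    by (intro topological_tendstoD) auto
  moreover have "eventually (\<lambda>s. s > (0::real)) (at_right 0)" by (simp add: eventually_at_right_less)
  ultimately have "eventually (\<lambda>s. 0 \<le> Q s \<and> Q s \<le> 2 * A * s powr (1 - m)) (at_right 0)"
  proof eventually_elim
    case (elim s)
    have g: "A * s powr (1 - m) > 0" using elim assms(2) by simp
    from elim(1) have "0 < Q s / (A * s powr (1 - m))" "Q s / (A * s powr (1 - m)) < 2" by auto
    with g show ?case by (simp add: field_simps)
  qed
  then obtain b where "b > 0" "\<And>y. 0 < y \<Longrightarrow> y < b \<Longrightarrow> 0 \<le> Q y \<and> Q y \<le> 2 * A * y powr (1 - m)"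
    unfolding eventually_at_right_field by auto
  thus ?thesis by blast
qed




lemma L2_loc_integrable:
  fixes g :: "real \<Rightarrow> real"
  assumes [measurable]: "g \<in> borel_measurable lborel" and "integrable lborel (\<lambda>x. (g x)\<^sup>2)"
    and S[measurable]: "S \<in> sets lborel" and fin: "emeasure lborel S < \<infinity>"
  shows "set_integrable lborel S g"
  unfolding set_integrable_def
proof (rule Bochner_Integration.integrable_bound[of _ "\<lambda>x. indicator S x + (g x)\<^sup>2"])
  have "integrable lborel (indicator S :: real \<Rightarrow> real)"
    using fin S by (intro integrable_real_indicator) auto
  thus "integrable lborel (\<lambda>x. indicator S x + (g x)\<^sup>2)"
    using assms(2) by simp
  show "(\<lambda>x. indicat_real S x *\<^sub>R g x) \<in> borel_measurable lborel" by measurable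
  show "AE x in lborel. norm (indicat_real S x *\<^sub>R g x) \<le> norm (indicator S x + (g x)\<^sup>2)"
  proof
    fix x
    have "0 \<le> (\<bar>g x\<bar> - 1)\<^sup>2" by simp
    hence "\<bar>g x\<bar> \<le> 1 + (g x)\<^sup>2"
      by (simp add: power2_eq_square algebra_simps abs_mult_self_eq)
    thus "norm (indicat_real S x *\<^sub>R g x) \<le> norm (indicator S x + (g x)\<^sup>2)"
      by (cases "x \<in> S") auto
  qed
qed

lemma integrable_ind_mult:
  fixes f :: "'a \<Rightarrow> real"
  shows "A \<in> sets M \<Longrightarrow> integrable M f \<Longrightarrow> integrable M (\<lambda>x. indicator A x * f x)"
  using integrable_mult_indicator[of A M f] by simp

lemma integrable_ind_const:
  "A \<in> sets M \<Longrightarrow> emeasure M A < \<infinity> \<Longrightarrow> integrable M (\<lambda>x. indicator A x * (c::real))"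
  using integrable_indicator[of A M c] by simp

lemma zero_on_intervals_AE:
  fixes f :: "real \<Rightarrow> real"
  assumes fm[measurable]: "f \<in> borel_measurable lborel"
    and loc: "\<And>a b. set_integrable lborel {a<..b} f"
    and zero: "\<And>a b. a \<le> b \<Longrightarrow> set_lebesgue_integral lborel {a<..b} f = 0"
  shows "AE x in lborel. f x = 0"
proof -
  have n: "AE x in lborel. x \<in> {- real n<..real n} \<longrightarrow> f x = 0" for n :: nat
  proof -
    define c where "c = real n"
    define f0 where "f0 x = indicator {-c<..c} x * f x" for x
    define P where "P x = max 0 (f0 x)" for x
    define N where "N x = max 0 (- f0 x)" for x
    have [measurable]: "f0 \<in> borel_measurable lborel" "P \<in> borel_measurable lborel" "N \<in> borel_measurable lborel"
      unfolding f0_def P_def N_def by measurable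
    have if0: "integrable lborel f0"
      using loc[of "-c" c] unfolding set_integrable_def f0_def by simp
    have iP: "integrable lborel P" unfolding P_def using if0 by auto
    have iN: "integrable lborel N" unfolding N_def using if0 by auto
    have f0PN: "f0 x = P x - N x" for x unfolding P_def N_def by auto
    have sint0: "(\<integral>y. indicator {x<..} y * f0 y \<partial>lborel) = 0" for x
    proof (cases "x < c")
      case True
      have "(\<lambda>y. indicator {x<..} y * f0 y) = (\<lambda>y. indicator {max x (-c)<..c} y * f y)"
        by (auto simp: f0_def indicator_def fun_eq_iff)
      moreover have "set_lebesgue_integral lborel {max x (-c)<..c} f = 0"
        using True by (intro zero) (auto simp: c_def)
      ultimately show ?thesis by (simp add: set_lebesgue_integral_def)
    next
      case False
      hence "(\<lambda>y. indicator {x<..} y * f0 y) = (\<lambda>y. 0)"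
        by (auto simp: f0_def indicator_def fun_eq_iff)
      thus ?thesis by simp
    qed
    have eqPN: "(\<integral>y. indicator {x<..} y * P y \<partial>lborel) = (\<integral>y. indicator {x<..} y * N y \<partial>lborel)" for x
    proof -
      have "(\<integral>y. indicator {x<..} y * f0 y \<partial>lborel) =
            (\<integral>y. indicator {x<..} y * P y \<partial>lborel) - (\<integral>y. indicator {x<..} y * N y \<partial>lborel)"
        unfolding f0PN right_diff_distrib
        by (intro Bochner_Integration.integral_diff integrable_ind_mult iP iN) auto
      thus ?thesis using sint0[of x] by simp
    qed
    have emP: "emeasure (density lborel (\<lambda>y. ennreal (P y))) {x<..} = ennreal (\<integral>y. indicator {x<..} y * P y \<partial>lborel)" for x
    proof -
      have "emeasure (density lborel (\<lambda>y. ennreal (P y))) {x<..} = (\<integral>\<^sup>+y. ennreal (indicator {x<..} y * P y) \<partial>lborel)"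
        by (subst emeasure_density) (auto intro!: nn_integral_cong simp: indicator_def)
      also have "\<dots> = ennreal (\<integral>y. indicator {x<..} y * P y \<partial>lborel)"
        by (intro nn_integral_eq_integral integrable_ind_mult iP) (auto simp: P_def indicator_def)
      finally show ?thesis .
    qed
    have emN: "emeasure (density lborel (\<lambda>y. ennreal (N y))) {x<..} = ennreal (\<integral>y. indicator {x<..} y * N y \<partial>lborel)" for x
    proof -
      have "emeasure (density lborel (\<lambda>y. ennreal (N y))) {x<..} = (\<integral>\<^sup>+y. ennreal (indicator {x<..} y * N y) \<partial>lborel)"
        by (subst emeasure_density) (auto intro!: nn_integral_cong simp: indicator_def)
      also have "\<dots> = ennreal (\<integral>y. indicator {x<..} y * N y \<partial>lborel)"
        by (intro nn_integral_eq_integral integrable_ind_mult iN) (auto simp: N_def indicator_def)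
      finally show ?thesis .
    qed
    have "density lborel (\<lambda>y. ennreal (P y)) = density lborel (\<lambda>y. ennreal (N y))"
      by (rule measure_eqI_lessThan) (auto simp: emP emN eqPN)
    hence "AE y in lborel. ennreal (P y) = ennreal (N y)"
      by (intro sigma_finite_measure.density_unique[OF sigma_finite_lborel]) auto
    thus ?thesis
    proof (rule AE_mp, intro AE_I2 impI)
      fix y assume "ennreal (P y) = ennreal (N y)" and y: "y \<in> {- real n<..real n}"
      hence "P y = N y" by (simp add: P_def N_def)
      hence "f0 y = 0" using f0PN by simp
      thus "f y = 0" using y by (simp add: f0_def c_def)
    qed
  qed
  hence "AE x in lborel. \<forall>n::nat. x \<in> {- real n<..real n} \<longrightarrow> f x = 0"
    using n by (subst AE_all_countable) blast
  thus ?thesis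
  proof (rule AE_mp, intro AE_I2 impI)
    fix x assume H: "\<forall>n::nat. x \<in> {- real n<..real n} \<longrightarrow> f x = 0"
    obtain n :: nat where "\<bar>x\<bar> < real n" using reals_Archimedean2 by blast
    hence "- real n < x" "x \<le> real n" by auto
    thus "f x = 0" using H[rule_format, of n] by auto
  qed
qed

lemma weak_deriv_loc_int:
  assumes "is_weak_deriv u g"
  shows "set_integrable lborel {a<..b} g"
proof (rule L2_loc_integrable)
  show "g \<in> borel_measurable lborel" "integrable lborel (\<lambda>x. (g x)\<^sup>2)"
    using assms by (auto simp: is_weak_deriv_def)
  show "emeasure lborel {a<..b} < \<infinity>"
    by (cases "a \<le> b") auto
qed auto

lemma weak_deriv_unique:
  assumes g1: "is_weak_deriv u g1" and g2: "is_weak_deriv u g2"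
  shows "AE x in lborel. g1 x = g2 x"
proof -
  have [measurable]: "g1 \<in> borel_measurable lborel" "g2 \<in> borel_measurable lborel"
    using g1 g2 by (auto simp: is_weak_deriv_def)
  have "AE x in lborel. g1 x - g2 x = 0"
  proof (rule zero_on_intervals_AE)
    fix a b :: real
    show "set_integrable lborel {a<..b} (\<lambda>x. g1 x - g2 x)"
      using weak_deriv_loc_int[OF g1] weak_deriv_loc_int[OF g2] by (rule set_integral_diff(1))
    assume ab: "a \<le> b"
    have "set_lebesgue_integral lborel {a<..b} (\<lambda>x. g1 x - g2 x) =
          set_lebesgue_integral lborel {a<..b} g1 - set_lebesgue_integral lborel {a<..b} g2"
      using weak_deriv_loc_int[OF g1] weak_deriv_loc_int[OF g2] by (rule set_integral_diff(2))
    also have "\<dots> = (LBINT t=a..b. g1 t) - (LBINT t=a..b. g2 t)"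
      using ab by (simp add: interval_integral_Ioc)
    also have "\<dots> = 0" using g1 g2 ab by (auto simp: is_weak_deriv_def)
    finally show "set_lebesgue_integral lborel {a<..b} (\<lambda>x. g1 x - g2 x) = 0" .
  qed simp
  thus ?thesis by auto
qed

lemma wderiv_is:
  assumes "u \<in> H1" shows "is_weak_deriv u (wderiv u)"
  using assms unfolding H1_def wderiv_def by (metis (mono_tags) mem_Collect_eq someI_ex)

lemma slope_bound:
  assumes u: "u \<in> DM M" and M: "M > 0"
  shows "(u 0)^3 \<le> 16 * M * (\<integral>x. (wderiv u x)\<^sup>2 \<partial>lborel)"
proof -
  define g where "g = wderiv u"
  have uH: "u \<in> H1" and unn: "\<And>x. u x \<ge> 0" and ui: "integrable lborel u" and uM: "(\<integral>x. u x \<partial>lborel) = M"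
    using u by (auto simp: DM_def)
  have wd: "is_weak_deriv u g" unfolding g_def by (rule wderiv_is[OF uH])
  have [measurable]: "g \<in> borel_measurable lborel" and gi: "integrable lborel (\<lambda>x. (g x)\<^sup>2)"
    using wd by (auto simp: is_weak_deriv_def)
  have [measurable]: "u \<in> borel_measurable lborel" using uH by (auto simp: H1_def)
  define G where "G = (\<integral>x. (g x)\<^sup>2 \<partial>lborel)"
  have G0: "G \<ge> 0" unfolding G_def by simp
  define h where "h = u 0"
  show ?thesis
  proof (cases "h > 0")
    case False
    hence "h = 0" using unn[of 0] by (auto simp: h_def)
    thus ?thesis using G0 M by (simp add: h_def g_def[symmetric] G_def[symmetric])
  next
    case hpos: True
    define T where "T = 4 * M / h"
    have T0: "T > 0" using M hpos by (simp add: T_def)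
    have "\<exists>x\<in>{0..T}. u x \<le> h / 2"
    proof (rule ccontr)
      assume "\<not> ?thesis"
      hence big: "\<And>x. x \<in> {0..T} \<Longrightarrow> u x > h / 2" by (meson not_le)
      have "(\<integral>x. indicator {0..T} x * (h/2) \<partial>lborel) \<le> (\<integral>x. indicator {0..T} x * u x \<partial>lborel)"
      proof (rule integral_mono)
        show "integrable lborel (\<lambda>x. indicator {0..T} x * (h/2))"
          using integrable_real_indicator[of "{0..T}" lborel] T0
          by (intro integrable_mult_left[where c="h/2", simplified mult.commute]) auto
        show "integrable lborel (\<lambda>x. indicator {0..T} x * u x)" by (intro integrable_ind_mult ui) auto
      qed (use big in \<open>auto simp: indicator_def less_imp_le\<close>)
      also have "\<dots> \<le> (\<integral>x. u x \<partial>lborel)"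
        using unn by (intro integral_mono integrable_ind_mult ui) (auto simp: indicator_def)
      also have "\<dots> = M" by (rule uM)
      finally have "T * (h/2) \<le> M" using T0 by simp
      thus False using M hpos by (simp add: T_def field_simps)
    qed
    then obtain x where x: "0 \<le> x" "x \<le> T" "u x \<le> h / 2" by auto
    define c where "c = h\<^sup>2 / (8 * M)"
    have c0: "c > 0" using hpos M by (simp add: c_def)
    have li: "set_integrable lborel {0<..x} g" by (rule weak_deriv_loc_int[OF wd])
    have "u x - u 0 = (LBINT t=ereal 0..ereal x. g t)" using wd x(1) by (auto simp: is_weak_deriv_def)
    also have "\<dots> = (\<integral>t. indicator {0<..x} t * g t \<partial>lborel)"
      using x(1) interval_integral_Ioc[of 0 x g] by (simp add: set_lebesgue_integral_def)
    finally have eq: "h - u x = (\<integral>t. indicator {0<..x} t * (- g t) \<partial>lborel)"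
      by (simp add: h_def)
    have "\<dots> \<le> (\<integral>t. (g t)\<^sup>2 / (2*c) + indicator {0<..x} t * (c/2) \<partial>lborel)"
    proof (rule integral_mono)
      show "integrable lborel (\<lambda>t. indicator {0<..x} t * (- g t))"
        using li unfolding set_integrable_def by simp
      show "integrable lborel (\<lambda>t. (g t)\<^sup>2 / (2*c) + indicator {0<..x} t * (c/2))"
        using gi x(1) by (intro Bochner_Integration.integrable_add integrable_ind_const) auto
      fix t
      have "0 \<le> (g t + c)\<^sup>2" by simp
      hence "- g t \<le> (g t)\<^sup>2 / (2*c) + c/2"
        using c0 by (simp add: field_simps power2_eq_square) 
      moreover have "0 \<le> (g t)\<^sup>2 / (2*c)" using c0 by simp
      ultimately show "indicator {0<..x} t * (- g t) \<le> (g t)\<^sup>2 / (2*c) + indicator {0<..x} t * (c/2)"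
        by (auto simp: indicator_def)
    qed
    also have "\<dots> = G / (2*c) + x * (c/2)"
      using gi x(1) by (subst Bochner_Integration.integral_add) (auto simp: G_def)
    finally have "h - u x \<le> G / (2*c) + x * (c/2)" using eq by simp
    hence "h / 2 \<le> G / (2*c) + T * (c/2)"
    proof -
      have "x * (c/2) \<le> T * (c/2)" using x c0 by (intro mult_right_mono) auto
      thus ?thesis using \<open>h - u x \<le> G / (2*c) + x * (c/2)\<close> x(3) by linarith
    qed
    hence "h / 2 \<le> G / (2*c) + h / 4"
      using hpos M by (simp add: T_def c_def field_simps power2_eq_square)
    hence "h / 4 \<le> G / (2*c)" by simp
    hence "h / 4 * (2*c) \<le> G" using c0 by (simp add: field_simps)
    hence "h^3 \<le> 16 * M * G" using hpos M by (simp add: c_def field_simps power2_eq_square power3_eq_cube)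
    thus ?thesis by (simp add: h_def G_def g_def)
  qed
qed

lemma energy_lower:
  assumes u: "u \<in> DM M" and Mpos: "M > 0" and Qm[measurable]: "Q \<in> borel_measurable borel"
    and s1: "s1 > 0" "\<forall>s. 0 < s \<and> s < s1 \<longrightarrow> 0 \<le> Q s"
    and K: "\<forall>s. -K \<le> Q s" "K \<ge> 0" and Q0: "\<forall>s\<le>0. Q s = 0"
  shows "ereal ((\<integral>x. (wderiv u x)\<^sup>2 \<partial>lborel) / 2 - 2 * K * M / s1) \<le> energy Q u"
proof -
  define g where "g = wderiv u"
  have uH: "u \<in> H1" and unn: "\<And>x. u x \<ge> 0" and ui: "integrable lborel u" and uM: "(\<integral>x. u x \<partial>lborel) = M"
    using u by (auto simp: DM_def)
  have wd: "is_weak_deriv u g" unfolding g_def by (rule wderiv_is[OF uH])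
  have [measurable]: "g \<in> borel_measurable lborel" and gi: "integrable lborel (\<lambda>x. (g x)\<^sup>2)"
    using wd by (auto simp: is_weak_deriv_def)
  have [measurable]: "u \<in> borel_measurable lborel" using uH by (auto simp: H1_def)
  define G where "G = (\<integral>x. (g x)\<^sup>2 \<partial>lborel)"
  define f where "f x = (1/2) * (g x)\<^sup>2 + Q (u x)" for x
  have [measurable]: "f \<in> borel_measurable lborel" unfolding f_def by measurable
  define P where "P = (\<integral>\<^sup>+ x. ennreal (max 0 (f x)) \<partial>lborel)"
  define N where "N = (\<integral>\<^sup>+ x. ennreal (max 0 (- f x)) \<partial>lborel)"
  define NQ where "NQ = (\<integral>\<^sup>+ x. ennreal (max 0 (- Q (u x))) \<partial>lborel)"
  define B where "B = K * M / s1"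
  have B0: "B \<ge> 0" using K Mpos s1 by (simp add: B_def)
  have E: "energy Q u = enn2ereal P - enn2ereal N"
    by (simp add: energy_def ext_integral_def P_def N_def f_def g_def)
  have NNQ: "N \<le> NQ" unfolding N_def NQ_def
  proof (intro nn_integral_mono ennreal_leI)
    fix x
    have "0 \<le> (g x)\<^sup>2" by simp
    thus "max 0 (- f x) \<le> max 0 (- Q (u x))" unfolding f_def by linarith
  qed
  have NQB: "NQ \<le> ennreal B"
  proof -
    have "NQ \<le> (\<integral>\<^sup>+ x. ennreal ((K / s1) * u x) \<partial>lborel)"
      unfolding NQ_def
    proof (intro nn_integral_mono ennreal_leI)
      fix x
      show "max 0 (- Q (u x)) \<le> K / s1 * u x"
      proof (cases "u x < s1")
        case True
        have "Q (u x) \<ge> 0"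
        proof (cases "u x = 0")
          case True thus ?thesis using Q0 by auto
        next
          case False thus ?thesis using s1(2) unn[of x] \<open>u x < s1\<close> by auto
        qed
        thus ?thesis using unn[of x] K s1 by auto
      next
        case False
        hence "K \<le> K / s1 * u x" using K s1 by (simp add: field_simps mult_left_mono)
        moreover have "- K \<le> Q (u x)" using K(1) by auto
        ultimately show ?thesis using K(2) by linarith
      qed
    qed
    also have "\<dots> = ennreal (\<integral>x. (K / s1) * u x \<partial>lborel)"
      using ui unn K s1 by (intro nn_integral_eq_integral) auto
    also have "\<dots> = ennreal B" using uM by (simp add: B_def)
    finally show ?thesis .
  qed
  have PNQ: "ennreal (G / 2) \<le> P + NQ"
  proof -
    have "ennreal (G / 2) = (\<integral>\<^sup>+ x. ennreal ((g x)\<^sup>2 / 2) \<partial>lborel)"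
      using gi by (subst nn_integral_eq_integral) (auto simp: G_def)
    also have "\<dots> \<le> (\<integral>\<^sup>+ x. ennreal (max 0 (f x)) + ennreal (max 0 (- Q (u x))) \<partial>lborel)"
    proof (intro nn_integral_mono)
      fix x
      have "(g x)\<^sup>2 / 2 \<le> max 0 (f x) + max 0 (- Q (u x))" unfolding f_def by linarith
      thus "ennreal ((g x)\<^sup>2 / 2) \<le> ennreal (max 0 (f x)) + ennreal (max 0 (- Q (u x)))"
        by (simp flip: ennreal_plus add: ennreal_leI)
    qed
    also have "\<dots> = P + NQ" unfolding P_def NQ_def by (rule nn_integral_add) auto
    finally show ?thesis .
  qed
  have "ereal (G / 2 - 2 * B) \<le> enn2ereal P - enn2ereal N"
  proof (cases P rule: ennreal_cases)
    case top thus ?thesis using NNQ NQB by (auto simp: top_ennreal.rep_eq)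
  next
    case (real p)
    obtain n where n: "N = ennreal n" "n \<ge> 0" using NNQ NQB
      by (metis ennreal_cases ennreal_less_top linorder_not_le top.extremum_unique)
    have nB: "n \<le> B" using NNQ NQB n B0 by (metis ennreal_le_iff order_trans)
    obtain q where q: "NQ = ennreal q" "q \<ge> 0" using NQB
      by (metis ennreal_cases ennreal_less_top linorder_not_le top.extremum_unique)
    have qB: "q \<le> B" using NQB q B0 by (simp add: ennreal_le_iff)
    have "ennreal (G / 2) \<le> ennreal (p + q)" using PNQ real q by (simp add: ennreal_plus)
    hence "G / 2 \<le> p + q" using real q by (subst (asm) ennreal_le_iff) auto
    thus ?thesis using real n nB qB by simp
  qed
  thus ?thesis using E by (simp add: G_def g_def B_def mult.assoc)
qed




definition psi :: "real \<Rightarrow> real \<Rightarrow> real" where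
  "psi p t = (max 0 (t * (1 - t))) powr p"

definition dpsi :: "real \<Rightarrow> real \<Rightarrow> real" where
  "dpsi p t = p * (1 - 2 * t) * (t * (1 - t)) powr (p - 1)"

lemma psi_cont: "p > 0 \<Longrightarrow> continuous_on UNIV (psi p)"
  unfolding psi_def by (intro continuous_on_powr') (auto intro!: continuous_intros)

lemma psi_out: "t \<notin> {0<..<1} \<Longrightarrow> psi p t = 0"
proof -
  assume "t \<notin> {0<..<1}"
  hence "t * (1 - t) \<le> 0"
    by (cases "t \<le> 0") (auto simp: mult_nonpos_nonneg mult_nonneg_nonpos not_le)
  thus ?thesis by (simp add: psi_def max_def)
qed

lemma psi_in: "t \<in> {0<..<1} \<Longrightarrow> psi p t = (t * (1 - t)) powr p"
  by (simp add: psi_def max_def)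

lemma psi_nonneg: "psi p t \<ge> 0" by (simp add: psi_def)

lemma psi_le1: "p > 0 \<Longrightarrow> psi p t \<le> 1"
proof -
  assume p: "p > 0"
  have "max 0 (t * (1 - t)) \<le> 1"
  proof -
    have "0 \<le> (t - 1/2)\<^sup>2" by simp
    hence "t * (1 - t) \<le> 1" by (simp add: power2_eq_square algebra_simps)
    thus ?thesis by simp
  qed
  thus ?thesis unfolding psi_def using p by (intro powr_le1) auto
qed

lemma psi_deriv:
  assumes "t \<in> {0<..<1}"
  shows "(psi p has_real_derivative dpsi p t) (at t)"
proof -
  have pos: "t * (1 - t) > 0" using assms by auto
  have "((\<lambda>t. (t * (1 - t)) powr p) has_real_derivative
          p * (t * (1 - t)) powr (p - of_nat 1) * (1 - 2 * t)) (at t)"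
    by (rule DERIV_fun_powr[where g="\<lambda>t. t * (1 - t)", OF _ pos]) (auto intro!: derivative_eq_intros)
  hence d: "((\<lambda>t. (t * (1 - t)) powr p) has_real_derivative dpsi p t) (at t)"
    by (simp add: dpsi_def mult_ac)
  show ?thesis
    by (rule has_field_derivative_transform_within_open[OF d, of "{0<..<1}"])
       (use assms in \<open>auto simp: psi_in\<close>)
qed

lemma psi_meas[measurable]: "psi p \<in> borel_measurable borel"
  unfolding psi_def by measurable

lemma dpsi_meas[measurable]: "dpsi p \<in> borel_measurable borel"
  unfolding dpsi_def by measurable

lemma beta_int:
  fixes r :: real
  assumes "r > -1"
  shows "integrable lborel (\<lambda>t. indicator {0..1} t * (t * (1 - t)) powr r)"
proof -
  have "set_integrable lborel {0..1} (\<lambda>t. t powr ((r+1) - 1) * (1 - t) powr ((r+1) - 1))"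
    using assms by (intro integrable_Beta[of "r+1" "r+1"]) auto
  thus ?thesis unfolding set_integrable_def by (simp add: powr_mult)
qed

lemma dpsi_sq_int:
  assumes "p > 1/2"
  shows "integrable lborel (\<lambda>t. indicator {0..1} t * (dpsi p t)\<^sup>2)"
proof (rule Bochner_Integration.integrable_bound)
  show "integrable lborel (\<lambda>t. p\<^sup>2 * (indicator {0..1} t * (t * (1 - t)) powr (2*p - 2)))"
    using assms by (intro integrable_mult_right beta_int) auto
  show "(\<lambda>t. indicator {0..1} t * (dpsi p t)\<^sup>2) \<in> borel_measurable lborel" by measurable
  show "AE t in lborel. norm (indicator {0..1} t * (dpsi p t)\<^sup>2)
          \<le> norm (p\<^sup>2 * (indicator {0..1} t * (t * (1 - t)) powr (2*p - 2)))"
  proof (rule AE_I2)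
    fix t :: real
    show "norm (indicator {0..1} t * (dpsi p t)\<^sup>2)
          \<le> norm (p\<^sup>2 * (indicator {0..1} t * (t * (1 - t)) powr (2*p - 2)))"
    proof (cases "t \<in> {0..1}")
      case True
      have sq: "((t * (1 - t)) powr (p - 1))\<^sup>2 = (t * (1 - t)) powr (2*p - 2)"
        by (simp add: powr_powr[symmetric] power2_eq_square powr_add[symmetric] algebra_simps
             flip: powr_add)
      have "0 \<le> t * (1 - t)" using True by auto
      moreover have "(1 - 2*t)\<^sup>2 = 1 - 4 * (t * (1 - t))" by (simp add: power2_eq_square algebra_simps)
      ultimately have "(1 - 2*t)\<^sup>2 \<le> 1" by linarith
      hence "(dpsi p t)\<^sup>2 \<le> p\<^sup>2 * (t * (1 - t)) powr (2*p - 2)"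
        unfolding dpsi_def power_mult_distrib sq
        by (intro mult_right_mono) (auto intro: mult_left_le)
      thus ?thesis using True by auto
    qed auto
  qed
qed

lemma psi_int: "p > 0 \<Longrightarrow> integrable lborel (psi p)"
proof (rule Bochner_Integration.integrable_bound)
  show "integrable lborel (indicator {0..1} :: real \<Rightarrow> real)" by (intro integrable_real_indicator) auto
  assume p: "p > 0"
  show "AE x in lborel. norm (psi p x) \<le> norm (indicator {0..1} x :: real)"
  proof (rule AE_I2)
    fix x :: real show "norm (psi p x) \<le> norm (indicator {0..1} x :: real)"
      using psi_le1[OF p, of x] psi_out[of x p] psi_nonneg[of p x]
      by (cases "x \<in> {0<..<1}") (auto simp: indicator_def)
  qed
qed auto

lemma psi_int_pos: "p > 0 \<Longrightarrow> (\<integral>t. psi p t \<partial>lborel) > 0"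
proof -
  assume p: "p > 0"
  define c where "c = (3/16 :: real) powr p"
  have c0: "c > 0" by (simp add: c_def)
  have "(\<integral>t. indicator {1/4..3/4::real} t * c \<partial>lborel) \<le> (\<integral>t. psi p t \<partial>lborel)"
  proof (rule integral_mono)
    show "integrable lborel (\<lambda>t. indicator {1/4..3/4::real} t * c)"
      using integrable_indicator[of "{1/4..3/4::real}" lborel c] by (auto intro!: integrable_real_indicator simp: less_top[symmetric] inverse_ennreal)
    show "integrable lborel (psi p)" using p by (rule psi_int)
    fix t :: real
    show "indicator {1/4..3/4::real} t * c \<le> psi p t"
    proof (cases "t \<in> {1/4..3/4}")
      case True
      have "0 \<le> (3/4 - t) * (t - 1/4)" using True by auto
      moreover have "(3/4 - t) * (t - 1/4) = t * (1 - t) - 3/16" by algebra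
      ultimately have "3/16 \<le> t * (1 - t)" by linarith
      hence "c \<le> (t * (1 - t)) powr p" unfolding c_def using p by (intro powr_mono2) auto
      thus ?thesis using True by (simp add: psi_in)
    qed (simp add: psi_nonneg)
  qed
  moreover have "(\<integral>t. indicator {1/4..3/4::real} t * c \<partial>lborel) = c / 2" by simp
  ultimately show ?thesis using c0 by linarith
qed




lemma integrable_scale:
  fixes F :: "real \<Rightarrow> real"
  assumes "integrable lborel F" "lam > 0"
  shows "integrable lborel (\<lambda>x. F (x / lam))"
  using lborel_integrable_real_affine[OF assms(1), of "1/lam" 0] assms(2) by simp

lemma integral_scale:
  fixes F :: "real \<Rightarrow> real"
  assumes "lam > 0"
  shows "(\<integral>x. F (x / lam) \<partial>lborel) = lam * (\<integral>x. F x \<partial>lborel)"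
  using lborel_integral_real_affine[of lam "\<lambda>x. F (x / lam)" 0] assms by simp

lemma test_weak:
  fixes p a lam :: real
  assumes p: "1/2 < p" "p < 1" and a: "a > 0" and lam: "lam > 0"
  defines "v \<equiv> \<lambda>x. a * psi p (x / lam)"
  defines "phi \<equiv> \<lambda>x. a / lam * (indicator {0..1} (x / lam) * dpsi p (x / lam))"
  shows "is_weak_deriv v phi"
proof -
  have [measurable]: "phi \<in> borel_measurable lborel" unfolding phi_def by measurable
  have sqeq: "(\<lambda>x. (phi x)\<^sup>2) = (\<lambda>x. (a / lam)\<^sup>2 * (indicator {0..1} (x / lam) * (dpsi p (x / lam))\<^sup>2))"
    by (auto simp: phi_def fun_eq_iff power_mult_distrib power_divide indicator_def)
  have sqi: "integrable lborel (\<lambda>x. (phi x)\<^sup>2)"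
    unfolding sqeq
    by (intro integrable_mult_right integrable_scale[where F="\<lambda>t. indicator {0..1} t * (dpsi p t)\<^sup>2"] dpsi_sq_int p lam)
  have vcont: "continuous_on UNIV v"
    unfolding v_def using p lam
    by (intro continuous_intros continuous_on_compose2[OF psi_cont[of p]]) auto
  have deriv: "(v has_real_derivative phi x) (at x)" if x: "x \<notin> {0, lam}" for x
  proof -
    have "x \<noteq> 0" "x \<noteq> lam" using x by auto
    then consider "x < 0" | "0 < x \<and> x < lam" | "x > lam" by linarith
    moreover have d0: "((\<lambda>_. 0) has_real_derivative 0) (at x)" by simp
    ultimately show ?thesis
    proof cases
      case 1
      have neg: "y / lam < 0" if "y < 0" for y using that lam by (simp add: divide_neg_pos)
      have z: "(\<lambda>_. 0) y = v y" if "y \<in> {..<0}" for y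
        using neg[of y] that by (simp add: v_def psi_out)
      have p0: "phi x = 0" using neg[OF 1] by (simp add: phi_def indicator_def)
      show ?thesis unfolding p0
        by (rule has_field_derivative_transform_within_open[of "\<lambda>_. 0" 0 x "{..<0}" v]) (use z 1 d0 in auto)
    next
      case 3
      have big: "y / lam > 1" if "y > lam" for y using that lam by simp
      have z: "(\<lambda>_. 0) y = v y" if "y \<in> {lam<..}" for y
        using big[of y] that by (simp add: v_def psi_out)
      have p0: "phi x = 0" using big[OF 3] by (simp add: phi_def indicator_def)
      show ?thesis unfolding p0
        by (rule has_field_derivative_transform_within_open[of "\<lambda>_. 0" 0 x "{lam<..}" v]) (use z 3 d0 in auto)
    next
      case 2
      have t: "x / lam \<in> {0<..<1}" using 2 lam by auto
      have "((\<lambda>x. psi p (x / lam)) has_real_derivative dpsi p (x / lam) * (1 / lam)) (at x)"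
        by (rule DERIV_chain2[where g="\<lambda>x. x / lam", OF psi_deriv[OF t]]) (use lam in \<open>auto intro!: derivative_eq_intros\<close>)
      hence "(v has_real_derivative a * (dpsi p (x / lam) * (1 / lam))) (at x)"
        unfolding v_def by (rule DERIV_cmult)
      moreover have "phi x = a * (dpsi p (x / lam) * (1 / lam))"
        using t by (simp add: phi_def)
      ultimately show ?thesis by simp
    qed
  qed
  have ftc: "v b - v a0 = (LBINT t=a0..b. phi t)" if ab: "a0 \<le> b" for a0 b
  proof -
    have hi: "(phi has_integral v b - v a0) {a0..b}"
    proof (rule fundamental_theorem_of_calculus_interior_strong[of "{0, lam}"])
      show "finite {0, lam}" by simp
      show "a0 \<le> b" by (rule ab)
      show "continuous_on {a0..b} v" using vcont by (rule continuous_on_subset) simp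
      fix x assume "x \<in> {a0<..<b} - {0, lam}"
      hence "x \<notin> {0, lam}" by blast
      thus "(v has_vector_derivative phi x) (at x)"
        using deriv by (simp add: has_real_derivative_iff_has_vector_derivative[symmetric])
    qed
    have si: "set_integrable lborel {a0..b} phi"
      by (rule L2_loc_integrable) (use sqi ab in auto)
    have "(LBINT t=a0..b. phi t) = (LBINT t:{a0..b}. phi t)" using ab by (rule interval_integral_Icc)
    also have "\<dots> = integral {a0..b} phi" by (rule set_borel_integral_eq_integral(2)[OF si])
    also have "\<dots> = v b - v a0" using hi by (rule integral_unique)
    finally show ?thesis by simp
  qed
  show ?thesis unfolding is_weak_deriv_def using sqi ftc by auto
qed

definition tv :: "real \<Rightarrow> real \<Rightarrow> real \<Rightarrow> real \<Rightarrow> real" where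
  "tv p a lam x = a * psi p (x / lam)"
definition tphi :: "real \<Rightarrow> real \<Rightarrow> real \<Rightarrow> real \<Rightarrow> real" where
  "tphi p a lam x = a / lam * (indicator {0..1} (x / lam) * dpsi p (x / lam))"

lemma tv_meas[measurable]: "tv p a lam \<in> borel_measurable borel"
  unfolding tv_def by measurable

lemma tphi_meas[measurable]: "tphi p a lam \<in> borel_measurable borel"
  unfolding tphi_def by measurable

lemma tv_weak:
  "1/2 < p \<Longrightarrow> p < 1 \<Longrightarrow> a > 0 \<Longrightarrow> lam > 0 \<Longrightarrow> is_weak_deriv (tv p a lam) (tphi p a lam)"
  using test_weak[of p a lam] unfolding tv_def[abs_def] tphi_def[abs_def] by simp

lemma tphi_sq_integral:
  assumes p: "1/2 < p" and lam: "lam > 0"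
  shows "integrable lborel (\<lambda>x. (tphi p a lam x)\<^sup>2)"
    "(\<integral>x. (tphi p a lam x)\<^sup>2 \<partial>lborel) = (a / lam)\<^sup>2 * lam * (\<integral>t. indicator {0..1} t * (dpsi p t)\<^sup>2 \<partial>lborel)"
proof -
  have sqeq: "(\<lambda>x. (tphi p a lam x)\<^sup>2) = (\<lambda>x. (a / lam)\<^sup>2 * (indicator {0..1} (x / lam) * (dpsi p (x / lam))\<^sup>2))"
    by (auto simp: tphi_def fun_eq_iff power_mult_distrib power_divide indicator_def)
  show "integrable lborel (\<lambda>x. (tphi p a lam x)\<^sup>2)"
    unfolding sqeq
    by (intro integrable_mult_right integrable_scale[where F="\<lambda>t. indicator {0..1} t * (dpsi p t)\<^sup>2"] dpsi_sq_int p lam)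
  show "(\<integral>x. (tphi p a lam x)\<^sup>2 \<partial>lborel) = (a / lam)\<^sup>2 * lam * (\<integral>t. indicator {0..1} t * (dpsi p t)\<^sup>2 \<partial>lborel)"
    unfolding sqeq using integral_scale[OF lam, of "\<lambda>t. indicator {0..1} t * (dpsi p t)\<^sup>2"]
    by simp
qed

lemma tv_DM:
  assumes p: "1/2 < p" "p < 1" and a: "a > 0" and lam: "lam > 0"
  shows "tv p a lam \<in> DM (a * lam * (\<integral>t. psi p t \<partial>lborel))"
proof -
  have p0: "p > 0" using p by simp
  have si: "integrable lborel (\<lambda>x. psi p (x / lam))"
    by (rule integrable_scale[OF psi_int[OF p0] lam])
  have vi: "integrable lborel (tv p a lam)"
    unfolding tv_def[abs_def] using si by (rule integrable_mult_right)
  have v2: "integrable lborel (\<lambda>x. (tv p a lam x)\<^sup>2)"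
  proof (rule Bochner_Integration.integrable_bound)
    show "integrable lborel (\<lambda>x. a * tv p a lam x)" using vi by (rule integrable_mult_right)
    show "(\<lambda>x. (tv p a lam x)\<^sup>2) \<in> borel_measurable lborel" by measurable
    show "AE x in lborel. norm ((tv p a lam x)\<^sup>2) \<le> norm (a * tv p a lam x)"
    proof (rule AE_I2)
      fix x
      have "0 \<le> psi p (x / lam)" "psi p (x / lam) \<le> 1" using psi_nonneg psi_le1[OF p0] by auto
      hence "psi p (x / lam) * psi p (x / lam) \<le> psi p (x / lam)" by (simp add: mult_left_le)
      hence "a * a * (psi p (x / lam) * psi p (x / lam)) \<le> a * a * psi p (x / lam)"
        using a by (intro mult_left_mono) auto
      thus "norm ((tv p a lam x)\<^sup>2) \<le> norm (a * tv p a lam x)"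
        using a \<open>0 \<le> psi p (x / lam)\<close> by (simp add: tv_def power2_eq_square mult_ac)
    qed
  qed
  have "tv p a lam \<in> H1"
    unfolding H1_def using v2 tv_weak[OF p a lam] by auto
  moreover have "(\<integral>x. tv p a lam x \<partial>lborel) = a * lam * (\<integral>t. psi p t \<partial>lborel)"
    unfolding tv_def using integral_scale[OF lam, of "psi p"] by simp
  moreover have "\<forall>x. tv p a lam x \<ge> 0" using a psi_nonneg by (simp add: tv_def)
  ultimately show ?thesis using vi by (simp add: DM_def)
qed

lemma tv_energy:
  fixes Q :: "real \<Rightarrow> real" and A m p a lam s1 :: real
  assumes p: "1/2 < p" "p < 1" and a: "a > 0" "a < s1" and lam: "lam > 0"
    and r: "p * (1 - m) > -1" and A: "A > 0"
    and Qm[measurable]: "Q \<in> borel_measurable borel" and Q0: "\<forall>s\<le>0. Q s = 0"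
    and Qs: "\<forall>s. 0 < s \<and> s < s1 \<longrightarrow> 0 \<le> Q s \<and> Q s \<le> 2 * A * s powr (1 - m)"
  shows "energy Q (tv p a lam) \<le> ereal ((a / lam)\<^sup>2 * lam * (\<integral>t. indicator {0..1} t * (dpsi p t)\<^sup>2 \<partial>lborel) / 2
            + 2 * A * a powr (1 - m) * (lam * (\<integral>t. indicator {0..1} t * (t * (1 - t)) powr (p * (1 - m)) \<partial>lborel)))"
proof -
  have p0: "p > 0" using p by simp
  define v where "v = tv p a lam"
  define phi where "phi = tphi p a lam"
  define w where "w = wderiv v"
  define C where "C = 2 * A * a powr (1 - m)"
  define Bf where "Bf t = indicator {0..1} t * (t * (1 - t)) powr (p * (1 - m))" for t :: real
  have [measurable]: "v \<in> borel_measurable borel" "phi \<in> borel_measurable borel" "Bf \<in> borel_measurable borel"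
    unfolding v_def phi_def Bf_def by measurable
  have vH: "v \<in> H1" using tv_DM[OF p a(1) lam] by (simp add: v_def DM_def)
  have wd: "is_weak_deriv v w" unfolding w_def by (rule wderiv_is[OF vH])
  have pd: "is_weak_deriv v phi" unfolding v_def phi_def by (rule tv_weak[OF p a(1) lam])
  have [measurable]: "w \<in> borel_measurable lborel" using wd by (simp add: is_weak_deriv_def)
  have AEw: "AE x in lborel. w x = phi x" by (rule weak_deriv_unique[OF wd pd])
  have vrange: "0 \<le> v x \<and> v x \<le> a" for x
    using psi_nonneg[of p "x / lam"] psi_le1[OF p0, of "x / lam"] a
    by (simp add: v_def tv_def mult_left_le)
  have Qv0: "Q (v x) \<ge> 0" for x
  proof (cases "v x = 0")
    case True thus ?thesis using Q0 by simp
  next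
    case False thus ?thesis using vrange[of x] Qs a by auto
  qed
  have QvB: "Q (v x) \<le> C * Bf (x / lam)" for x
  proof (cases "x / lam \<in> {0<..<1}")
    case True
    define t where "t = x / lam"
    have t01: "0 < t" "t < 1" using True by (auto simp: t_def)
    hence tp: "t * (1 - t) > 0" by simp
    have vx: "v x = a * (t * (1 - t)) powr p" using True by (simp add: v_def tv_def psi_in t_def)
    have "(t * (1 - t)) powr p > 0" using tp t01 by simp
    hence vpos: "v x > 0" using vx a by simp
    have "Q (v x) \<le> 2 * A * (v x) powr (1 - m)" using Qs vpos vrange[of x] a by auto
    also have "(v x) powr (1 - m) = a powr (1 - m) * (t * (1 - t)) powr (p * (1 - m))"
      unfolding vx using a tp by (simp add: powr_mult powr_powr)
    finally show ?thesis using True by (simp add: C_def Bf_def t_def mult_ac)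
  next
    case False
    hence "v x = 0" by (simp add: v_def tv_def psi_out)
    moreover have "C * Bf (x / lam) \<ge> 0" using A by (simp add: C_def Bf_def)
    ultimately show ?thesis using Q0 by simp
  qed
  have Bint: "integrable lborel Bf" unfolding Bf_def using r by (rule beta_int)
  have phii: "integrable lborel (\<lambda>x. (phi x)\<^sup>2)" unfolding phi_def by (rule tphi_sq_integral(1)[OF p(1) lam])
  define R where "R = (\<integral>x. (phi x)\<^sup>2 / 2 + C * Bf (x / lam) \<partial>lborel)"
  have Rint: "integrable lborel (\<lambda>x. (phi x)\<^sup>2 / 2 + C * Bf (x / lam))"
    using phii integrable_scale[OF Bint lam] by auto
  have Req: "R = (a / lam)\<^sup>2 * lam * (\<integral>t. indicator {0..1} t * (dpsi p t)\<^sup>2 \<partial>lborel) / 2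
            + C * (lam * (\<integral>t. Bf t \<partial>lborel))"
  proof -
    have "R = (\<integral>x. (phi x)\<^sup>2 \<partial>lborel) / 2 + C * (\<integral>x. Bf (x / lam) \<partial>lborel)"
      unfolding R_def using phii integrable_scale[OF Bint lam]
      by (subst Bochner_Integration.integral_add) auto
    thus ?thesis unfolding phi_def tphi_sq_integral(2)[OF p(1) lam] integral_scale[OF lam] .
  qed
  define f where "f x = (1/2) * (w x)\<^sup>2 + Q (v x)" for x
  have E: "energy Q v = enn2ereal (\<integral>\<^sup>+ x. ennreal (max 0 (f x)) \<partial>lborel)
                       - enn2ereal (\<integral>\<^sup>+ x. ennreal (max 0 (- f x)) \<partial>lborel)"
    by (simp add: energy_def ext_integral_def f_def w_def)
  have fnn: "f x \<ge> 0" for x using Qv0[of x] by (simp add: f_def)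
  have N0: "(\<integral>\<^sup>+ x. ennreal (max 0 (- f x)) \<partial>lborel) = 0"
  proof -
    have "(\<lambda>x. ennreal (max 0 (- f x))) = (\<lambda>x. 0)" using fnn by (auto simp: fun_eq_iff max_def intro: antisym)
    thus ?thesis by simp
  qed
  have "(\<integral>\<^sup>+ x. ennreal (max 0 (f x)) \<partial>lborel) = (\<integral>\<^sup>+ x. ennreal ((phi x)\<^sup>2 / 2 + Q (v x)) \<partial>lborel)"
  proof (rule nn_integral_cong_AE)
    show "AE x in lborel. ennreal (max 0 (f x)) = ennreal ((phi x)\<^sup>2 / 2 + Q (v x))"
      using AEw
    proof (rule AE_mp, intro AE_I2 impI)
      fix x assume "w x = phi x"
      thus "ennreal (max 0 (f x)) = ennreal ((phi x)\<^sup>2 / 2 + Q (v x))"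
        using fnn[of x] by (simp add: f_def)
    qed
  qed
  also have "\<dots> \<le> (\<integral>\<^sup>+ x. ennreal ((phi x)\<^sup>2 / 2 + C * Bf (x / lam)) \<partial>lborel)"
    by (intro nn_integral_mono ennreal_leI) (use QvB in auto)
  also have "\<dots> = ennreal R"
    unfolding R_def using Rint QvB Qv0
  proof (intro nn_integral_eq_integral AE_I2)
    fix x
    have "0 \<le> C * Bf (x / lam)" using QvB[of x] Qv0[of x] by linarith
    thus "0 \<le> (phi x)\<^sup>2 / 2 + C * Bf (x / lam)" by simp
  qed
  finally have P: "(\<integral>\<^sup>+ x. ennreal (max 0 (f x)) \<partial>lborel) \<le> ennreal R" .
  have R0: "R \<ge> 0" unfolding R_def
  proof (intro integral_nonneg_AE AE_I2)
    fix x
    have "0 \<le> C * Bf (x / lam)" using QvB[of x] Qv0[of x] by linarith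
    thus "0 \<le> (phi x)\<^sup>2 / 2 + C * Bf (x / lam)" by simp
  qed
  have "energy Q v \<le> ereal R"
  proof -
    have "enn2ereal (\<integral>\<^sup>+ x. ennreal (max 0 (f x)) \<partial>lborel) \<le> enn2ereal (ennreal R)"
      using P by (simp add: less_eq_ennreal.rep_eq[symmetric])
    thus ?thesis unfolding E N0 using R0 by (simp add: zero_ennreal.rep_eq)
  qed
  thus ?thesis unfolding Req by (simp add: v_def C_def Bf_def[abs_def])
qed




theorem mainTheorem15:
  fixes Q :: "real \<Rightarrow> real" and A m :: real and uM :: "real \<Rightarrow> real \<Rightarrow> real"
  assumes Q_C1: "\<forall>s>0. Q differentiable (at s)" "continuous_on {0<..} (deriv Q)"
    and Q_neg: "\<forall>s\<le>0. Q s = 0"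
    and Q_bdd: "bdd_below (range Q)"
    and Q_asymp: "Q \<sim>[at_right 0] (\<lambda>s. A * s powr (1 - m))"
    and A_pos: "A > 0" and m_range: "1 < m" "m < 3"
    and Q_deriv_bound: "\<exists>C \<epsilon>. \<epsilon> > 0 \<and> (\<forall>s. 0 < s \<and> s < \<epsilon> \<longrightarrow> \<bar>s * deriv Q s\<bar> \<le> C * Q s)"
    and H_R: "\<exists>\<delta>. 0 < \<delta> \<and> \<delta> < 1 \<and>
               (\<forall>s. (0 < s \<and> s < \<delta>) \<or> s > 1 / \<delta> \<longrightarrow> deriv (\<lambda>t. Q t / t) s \<noteq> 0)"
    and minim: "\<forall>M>0. is_minimizer Q M (uM M)"
    and even: "\<forall>M>0. \<forall>x. uM M (- x) = uM M x"
  shows "((\<lambda>M. uM M 0) \<longlongrightarrow> 0) (at_right 0)"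
proof -
  have Qc: "continuous_on {0<..} Q"
    using Q_C1(1) by (intro continuous_at_imp_continuous_on) (auto intro: differentiable_imp_continuous_within)
  have Qeq: "Q = (\<lambda>s. if s \<in> {0<..} then Q s else 0)"
    using Q_neg by (auto simp: fun_eq_iff not_less)
  have Qm: "Q \<in> borel_measurable borel"
    by (subst Qeq, rule borel_measurable_continuous_on_if) (auto intro: Qc continuous_on_const)
  obtain s1 where s1: "s1 > 0" "\<forall>s. 0 < s \<and> s < s1 \<longrightarrow> 0 \<le> Q s \<and> Q s \<le> 2 * A * s powr (1 - m)"
    using Q_small[OF Q_asymp A_pos] by blast
  obtain L where L: "\<And>s. L \<le> Q s" using Q_bdd by (auto simp: bdd_below_def)
  define K where "K = max 0 (- L)"
  have K: "\<forall>s. - K \<le> Q s" "K \<ge> 0" using L by (auto simp: K_def intro: order_trans[OF _ L])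
  define p where "p = 2 / (m + 1)"
  have p: "1/2 < p" "p < 1" "p * (1 - m) > -1" using m_range by (auto simp: p_def field_simps)
  define I where "I = (\<integral>t. psi p t \<partial>lborel)"
  have I0: "I > 0" unfolding I_def using p by (intro psi_int_pos) auto
  define J where "J = (\<integral>t. indicator {0..1} t * (dpsi p t)\<^sup>2 \<partial>lborel)"
  define Bc where "Bc = (\<integral>t. indicator {0..1} t * (t * (1 - t)) powr (p * (1 - m)) \<partial>lborel)"
  define \<beta> where "\<beta> = 2 / (m + 3)"
  define \<gamma> where "\<gamma> = 6 / (m + 3)"
  have \<beta>0: "\<beta> > 0" and \<gamma>0: "\<gamma> > 0" using m_range by (auto simp: \<beta>_def \<gamma>_def)
  have g1: "3 * \<beta> = \<gamma>" and g2: "2 - m * \<beta> = \<gamma>" using m_range by (auto simp: \<beta>_def \<gamma>_def field_simps)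
  define F where "F M = 32 * ((I * J / 2 + 2 * A * Bc / I) * M powr \<gamma>) + 64 * K * M\<^sup>2 / s1" for M :: real
  have key: "(uM M 0)^3 \<le> F M" if M: "M > 0" "M powr \<beta> < s1" for M
  proof -
    define a where "a = M powr \<beta>"
    define lam where "lam = M / (a * I)"
    have a0: "a > 0" using M by (simp add: a_def)
    have lam0: "lam > 0" using a0 I0 M by (simp add: lam_def)
    have aI: "a * lam * I = M" using a0 I0 by (simp add: lam_def)
    have vD: "tv p a lam \<in> DM M" using tv_DM[OF p(1,2) a0 lam0] aI by (simp add: I_def)
    define E1 where "E1 = (a / lam)\<^sup>2 * lam * J / 2 + 2 * A * a powr (1 - m) * (lam * Bc)"
    have "energy Q (tv p a lam) \<le> ereal E1"
      unfolding E1_def J_def Bc_def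
      by (rule tv_energy[OF p(1,2) a0 _ lam0 p(3) A_pos Qm Q_neg s1(2)]) (use M in \<open>simp add: a_def\<close>)
    moreover have "energy Q (uM M) \<le> energy Q (tv p a lam)"
      using minim M vD by (auto simp: is_minimizer_def)
    moreover have uD: "uM M \<in> DM M" using minim M by (auto simp: is_minimizer_def)
    have "ereal ((\<integral>x. (wderiv (uM M) x)\<^sup>2 \<partial>lborel) / 2 - 2 * K * M / s1) \<le> energy Q (uM M)"
      by (rule energy_lower[OF uD M(1) Qm s1(1) _ K Q_neg]) (use s1 in auto)
    ultimately have "(\<integral>x. (wderiv (uM M) x)\<^sup>2 \<partial>lborel) / 2 - 2 * K * M / s1 \<le> E1"
      by (metis ereal_less_eq(3) order_trans)
    hence G: "(\<integral>x. (wderiv (uM M) x)\<^sup>2 \<partial>lborel) \<le> 2 * E1 + 4 * K * M / s1" by simp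
    have "(uM M 0)^3 \<le> 16 * M * (\<integral>x. (wderiv (uM M) x)\<^sup>2 \<partial>lborel)"
      by (rule slope_bound[OF uD M(1)])
    also have "\<dots> \<le> 16 * M * (2 * E1 + 4 * K * M / s1)"
      using G M by (intro mult_left_mono) auto
    also have "\<dots> = 32 * (M * E1) + 64 * K * M\<^sup>2 / s1" by (simp add: algebra_simps power2_eq_square)
    also have "M * E1 = (I * J / 2 + 2 * A * Bc / I) * M powr \<gamma>"
    proof -
      have t1: "M * ((a / lam)\<^sup>2 * lam * J / 2) = I * J / 2 * a ^ 3"
        using a0 I0 M lam0 by (simp add: lam_def field_simps power2_eq_square power3_eq_cube)
      have apm: "a powr (1 - m) = a powr (- m) * a"
      proof -
        have "a powr (1 - m) = a powr (- m + 1)" by simp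
        also have "\<dots> = a powr (- m) * a powr 1" by (rule powr_add)
        finally show ?thesis using a0 by simp
      qed
      have t2: "M * (2 * A * a powr (1 - m) * (lam * Bc)) = 2 * A * Bc / I * (M\<^sup>2 * a powr (- m))"
        using a0 I0 M unfolding apm by (simp add: lam_def field_simps power2_eq_square)
      have a3: "a ^ 3 = M powr \<gamma>"
      proof -
        have "a ^ 3 = a powr (real 3)" using a0 by (rule powr_realpow[symmetric])
        also have "\<dots> = M powr (\<beta> * 3)" unfolding a_def by (simp add: powr_powr)
        finally show ?thesis using g1 by (simp add: mult.commute)
      qed
      have a2: "M\<^sup>2 * a powr (- m) = M powr \<gamma>"
      proof -
        have "M\<^sup>2 = M powr (real 2)" using M by (simp add: powr_realpow)
        moreover have "a powr (- m) = M powr (\<beta> * (- m))" unfolding a_def by (simp add: powr_powr)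
        moreover have "M powr (real 2) * M powr (\<beta> * (- m)) = M powr (real 2 + \<beta> * (- m))"
          by (rule powr_add[symmetric])
        ultimately have "M\<^sup>2 * a powr (- m) = M powr (real 2 + \<beta> * (- m))" by simp
        moreover have "real 2 + \<beta> * (- m) = \<gamma>" using g2 by (simp add: algebra_simps)
        ultimately show ?thesis by simp
      qed
      show ?thesis unfolding E1_def distrib_left t1 t2 a3 a2 by (simp add: algebra_simps)
    qed
    finally show ?thesis unfolding F_def .
  qed
  have ev_pos: "eventually (\<lambda>M::real. M > 0) (at_right 0)" by (simp add: eventually_at_right_less)
  have "((\<lambda>M::real. M powr \<beta>) \<longlongrightarrow> 0) (at_right 0)"
    by (rule tendsto_zero_powrI[OF _ tendsto_const _ \<beta>0])
       (auto intro: tendsto_ident_at eventually_mono[OF ev_pos])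
  hence ev_s1: "eventually (\<lambda>M. M powr \<beta> < s1) (at_right 0)"
    using s1(1) by (rule order_tendstoD(2))
  have Flim: "(F \<longlongrightarrow> 0) (at_right 0)"
  proof -
    have "((\<lambda>M::real. M powr \<gamma>) \<longlongrightarrow> 0) (at_right 0)"
      by (rule tendsto_zero_powrI[OF _ tendsto_const _ \<gamma>0])
         (auto intro: tendsto_ident_at eventually_mono[OF ev_pos])
    moreover have "((\<lambda>M::real. M\<^sup>2) \<longlongrightarrow> 0) (at_right 0)"
      by (auto intro!: tendsto_eq_intros tendsto_ident_at)
    ultimately show ?thesis unfolding F_def[abs_def]
      by (intro tendsto_add_zero tendsto_mult_right_zero tendsto_divide_zero)
  qed
  have unn: "eventually (\<lambda>M. 0 \<le> uM M 0) (at_right 0)"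
    using ev_pos by eventually_elim (use minim in \<open>auto simp: is_minimizer_def DM_def\<close>)
  have up: "eventually (\<lambda>M. uM M 0 \<le> root 3 (F M)) (at_right 0)"
    using ev_pos ev_s1 unn
  proof eventually_elim
    case (elim M)
    have "root 3 ((uM M 0)^3) \<le> root 3 (F M)"
      using key[OF elim(1,2)] by (intro real_root_le_mono) auto
    thus ?case using elim(3) by (simp add: real_root_power_cancel)
  qed
  have "((\<lambda>M. root 3 (F M)) \<longlongrightarrow> root 3 0) (at_right 0)"
    by (intro tendsto_real_root Flim)
  hence rlim: "((\<lambda>M. root 3 (F M)) \<longlongrightarrow> 0) (at_right 0)" by simp
  show ?thesis
    by (rule tendsto_sandwich[OF unn up tendsto_const rlim])
qed


end
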